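(* For each integer $n\ge 1$ there exists a 6-stack of rank $n$, and any two 6-stacks of rank $n$ are isomorphic.
   Context: All posets are finite. For a poset $P$ and $p\in P$, the rank $r(p)$ of $p$ is the largest $m$ such that there is a chain $p_0<p_1<\dots<p_m=p$ in $P$. The poset $P$ is ranked of rank $r(P)$ if every maximal chain of $P$ has exactly $r(P)+1$ elements. For integers $0\le i\le j$, $P(i,j)=\{p\in P: i\le r(p)\le j\}$ and $P(i)=P(i,i)$, each with the induced order. The 6-crown $C_6$ is the poset on $\{x_0,x_1,x_2,y_0,y_1,y_2\}$ whose only strict comparabilities are $x_0<y_0>x_1<y_1>x_2<y_2>x_0$. A 6-stack is a ranked poset $P$ of rank $n\ge 1$ such that for each $0\le i<n$, $P(i,i+1)$ is isomorphic to $C_6$. *)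

theory Defs
  imports Main
begin

definition finite_poset :: "'a set \<Rightarrow> ('a \<Rightarrow> 'a \<Rightarrow> bool) \<Rightarrow> bool" where
  "finite_poset P le \<longleftrightarrow> finite P
     \<and> (\<forall>x\<in>P. le x x)
     \<and> (\<forall>x\<in>P. \<forall>y\<in>P. le x y \<and> le y x \<longrightarrow> x = y)
     \<and> (\<forall>x\<in>P. \<forall>y\<in>P. \<forall>z\<in>P. le x y \<and> le y z \<longrightarrow> le x z)"

definition strict :: "('a \<Rightarrow> 'a \<Rightarrow> bool) \<Rightarrow> 'a \<Rightarrow> 'a \<Rightarrow> bool" where
  "strict le x y \<longleftrightarrow> le x y \<and> x \<noteq> y"

definition elem_rank :: "'a set \<Rightarrow> ('a \<Rightarrow> 'a \<Rightarrow> bool) \<Rightarrow> 'a \<Rightarrow> nat" where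
  "elem_rank P le p = Max {m. \<exists>xs. length xs = Suc m \<and> set xs \<subseteq> P
        \<and> sorted_wrt (strict le) xs \<and> last xs = p}"

definition is_chain :: "'a set \<Rightarrow> ('a \<Rightarrow> 'a \<Rightarrow> bool) \<Rightarrow> 'a set \<Rightarrow> bool" where
  "is_chain P le C \<longleftrightarrow> C \<subseteq> P \<and> (\<forall>x\<in>C. \<forall>y\<in>C. le x y \<or> le y x)"

definition maximal_chain :: "'a set \<Rightarrow> ('a \<Rightarrow> 'a \<Rightarrow> bool) \<Rightarrow> 'a set \<Rightarrow> bool" where
  "maximal_chain P le C \<longleftrightarrow> is_chain P le C \<and> (\<forall>D. is_chain P le D \<and> C \<subseteq> D \<longrightarrow> D = C)"

definition ranked_of_rank :: "'a set \<Rightarrow> ('a \<Rightarrow> 'a \<Rightarrow> bool) \<Rightarrow> nat \<Rightarrow> bool" where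
  "ranked_of_rank P le n \<longleftrightarrow> (\<forall>C. maximal_chain P le C \<longrightarrow> card C = Suc n)"

text \<open>P(i,j), carrying the induced order (the restriction of le)\<close>
definition rank_slice :: "'a set \<Rightarrow> ('a \<Rightarrow> 'a \<Rightarrow> bool) \<Rightarrow> nat \<Rightarrow> nat \<Rightarrow> 'a set" where
  "rank_slice P le i j = {p\<in>P. i \<le> elem_rank P le p \<and> elem_rank P le p \<le> j}"

definition poset_iso :: "'a set \<Rightarrow> ('a \<Rightarrow> 'a \<Rightarrow> bool) \<Rightarrow> 'b set \<Rightarrow> ('b \<Rightarrow> 'b \<Rightarrow> bool) \<Rightarrow> bool" where
  "poset_iso A leA B leB \<longleftrightarrow> (\<exists>f. bij_betw f A B \<and> (\<forall>x\<in>A. \<forall>y\<in>A. leA x y \<longleftrightarrow> leB (f x) (f y)))"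

text \<open>The 6-crown on {0..5}: x_i = i, y_i = 3+i; x0<y0>x1<y1>x2<y2>x0.\<close>
definition crown6 :: "nat set" where
  "crown6 = {0..5}"

definition crown6_le :: "nat \<Rightarrow> nat \<Rightarrow> bool" where
  "crown6_le a b \<longleftrightarrow> a = b \<or> (a, b) \<in> {(0,3),(1,3),(1,4),(2,4),(2,5),(0,5)}"

definition six_stack :: "'a set \<Rightarrow> ('a \<Rightarrow> 'a \<Rightarrow> bool) \<Rightarrow> nat \<Rightarrow> bool" where
  "six_stack P le n \<longleftrightarrow> finite_poset P le \<and> n \<ge> 1 \<and> ranked_of_rank P le n
     \<and> (\<forall>i<n. poset_iso (rank_slice P le i (Suc i)) le crown6 crown6_le)"

end

theory Submission
  imports Defs
begin

abbreviation rk where "rk P le p \<equiv> elem_rank P le p"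

lemma strict_sorted_distinct: "sorted_wrt (strict le) xs \<Longrightarrow> distinct xs"
  by (induction xs) (auto simp: strict_def)

lemma rank_set_bounded:
  assumes fp: "finite_poset P le"
  shows "{m. \<exists>xs. length xs = Suc m \<and> set xs \<subseteq> P
        \<and> sorted_wrt (strict le) xs \<and> last xs = p} \<subseteq> {..<card P}"
proof
  fix m assume "m \<in> {m. \<exists>xs. length xs = Suc m \<and> set xs \<subseteq> P
        \<and> sorted_wrt (strict le) xs \<and> last xs = p}"
  then obtain xs where xs: "length xs = Suc m" "set xs \<subseteq> P" "sorted_wrt (strict le) xs" by blast
  have "distinct xs" using xs(3) by (rule strict_sorted_distinct)
  then have "length xs = card (set xs)" by (simp add: distinct_card)
  also have "\<dots> \<le> card P" using fp xs(2) by (simp add: finite_poset_def card_mono)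
  finally show "m \<in> {..<card P}" using xs(1) by simp
qed

lemma rank_chain:
  assumes fp: "finite_poset P le" and p: "p \<in> P"
  shows "\<exists>xs. length xs = Suc (rk P le p) \<and> set xs \<subseteq> P \<and> sorted_wrt (strict le) xs \<and> last xs = p"
proof -
  let ?S = "{m. \<exists>xs. length xs = Suc m \<and> set xs \<subseteq> P
        \<and> sorted_wrt (strict le) xs \<and> last xs = p}"
  have fin: "finite ?S" using rank_set_bounded[OF fp] finite_subset by blast
  have "0 \<in> ?S" using p by (intro CollectI exI[of _ "[p]"]) auto
  then have "?S \<noteq> {}" by blast
  then have "Max ?S \<in> ?S" using fin by (rule Max_in[rotated])
  then show ?thesis unfolding elem_rank_def by blast
qed

lemma rank_ge:
  assumes fp: "finite_poset P le"
    and "length xs = Suc m" "set xs \<subseteq> P" "sorted_wrt (strict le) xs" "last xs = p"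
  shows "m \<le> rk P le p"
proof -
  let ?S = "{m. \<exists>xs. length xs = Suc m \<and> set xs \<subseteq> P
        \<and> sorted_wrt (strict le) xs \<and> last xs = p}"
  have fin: "finite ?S" using rank_set_bounded[OF fp] finite_subset by blast
  have "m \<in> ?S" using assms by blast
  then show ?thesis unfolding elem_rank_def using fin by simp
qed

lemma rank_mono:
  assumes fp: "finite_poset P le" and a: "a \<in> P" and b: "b \<in> P" and ab: "le a b" "a \<noteq> b"
  shows "rk P le a < rk P le b"
proof -
  obtain xs where xs: "length xs = Suc (rk P le a)" "set xs \<subseteq> P" "sorted_wrt (strict le) xs" "last xs = a"
    using rank_chain[OF fp a] by blast
  have xne: "xs \<noteq> []" using xs(1) by auto
  have below: "strict le x b" if x: "x \<in> set xs" for x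
  proof -
    have "le x a"
    proof (cases "x = a")
      case True then show ?thesis using fp a by (simp add: finite_poset_def)
    next
      case False
      have "xs = butlast xs @ [last xs]" using xne by simp
      then have "sorted_wrt (strict le) (butlast xs @ [a])" using xs(3,4) by simp
      moreover have "x \<in> set (butlast xs)"
      proof -
        have "x \<in> set (butlast xs @ [last xs])" using xne x by simp
        then show ?thesis using False xs(4) by simp
      qed
      ultimately show ?thesis by (auto simp: sorted_wrt_append strict_def)
    qed
    moreover have "x \<in> P" using x xs(2) by auto
    ultimately have "le x b" using fp a b ab unfolding finite_poset_def by blast
    moreover have "x \<noteq> b"
    proof
      assume "x = b"
      with \<open>le x a\<close> have "le b a" by simp
      then show False using fp a b ab unfolding finite_poset_def by blast
    qed
    ultimately show ?thesis by (simp add: strict_def)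
  qed
  have "Suc (rk P le a) \<le> rk P le b"
  proof (rule rank_ge[OF fp, of "xs @ [b]"])
    show "length (xs @ [b]) = Suc (Suc (rk P le a))" using xs(1) by simp
    show "set (xs @ [b]) \<subseteq> P" using xs(2) b by simp
    show "sorted_wrt (strict le) (xs @ [b])" unfolding sorted_wrt_append using xs(3) below by simp
    show "last (xs @ [b]) = b" by simp
  qed
  then show ?thesis by simp
qed

lemma rank_pred:
  assumes fp: "finite_poset P le" and p: "p \<in> P" and r: "rk P le p = Suc m"
  shows "\<exists>q\<in>P. le q p \<and> q \<noteq> p \<and> rk P le q = m"
proof -
  obtain xs where xs0: "length xs = Suc (rk P le p)" and xs: "set xs \<subseteq> P" "sorted_wrt (strict le) xs" "last xs = p"
    using rank_chain[OF fp p] by blast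
  have xs1: "length xs = Suc (Suc m)" using xs0 r by simp
  note xs = xs1 xs
  define q where "q = xs ! m"
  have qP: "q \<in> P" using xs(1,2) unfolding q_def by (metis lessI less_SucI nth_mem subsetD)
  have lastp: "xs ! Suc m = p" proof -
    have "xs \<noteq> []" using xs(1) by auto
    then have "last xs = xs ! (length xs - 1)" by (rule last_conv_nth)
    then show ?thesis using xs(1,4) by simp
  qed
  have sq: "strict le q p"
  proof -
    have "\<forall>i j. i < j \<longrightarrow> j < length xs \<longrightarrow> strict le (xs ! i) (xs ! j)"
      using xs(3) by (simp only: sorted_wrt_iff_nth_less)
    then have "strict le (xs ! m) (xs ! Suc m)" using xs(1) by simp
    then show ?thesis using lastp unfolding q_def by simp
  qed
  have "m \<le> rk P le q"
  proof (rule rank_ge[OF fp, of "take (Suc m) xs"])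
    show "length (take (Suc m) xs) = Suc m" using xs(1) by simp
    show "set (take (Suc m) xs) \<subseteq> P" using xs(2) by (meson order_trans set_take_subset)
    show "sorted_wrt (strict le) (take (Suc m) xs)" using xs(3) by (rule sorted_wrt_take)
    have "take (Suc m) xs \<noteq> []" using xs(1) by (cases xs) auto
    then have "last (take (Suc m) xs) = take (Suc m) xs ! (length (take (Suc m) xs) - 1)" by (rule last_conv_nth)
    then show "last (take (Suc m) xs) = q" using xs(1) unfolding q_def by simp
  qed
  moreover have "rk P le q < rk P le p" using rank_mono[OF fp qP p] sq by (simp add: strict_def)
  ultimately show ?thesis using qP sq r by (auto simp: strict_def)
qed



lemma chain_extend:
  assumes fin: "finite P" and C: "is_chain P le C"
  shows "\<exists>D. maximal_chain P le D \<and> C \<subseteq> D"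
proof -
  let ?Q = "\<lambda>D. is_chain P le D \<and> C \<subseteq> D"
  have b: "\<forall>D. ?Q D \<longrightarrow> card D \<le> card P"
    using fin by (auto simp: is_chain_def intro: card_mono)
  obtain D where D: "?Q D" and mx: "\<forall>E. ?Q E \<longrightarrow> card E \<le> card D"
  proof -
    have "\<forall>y. ?Q y \<longrightarrow> card y < Suc (card P)" using b by auto
    then have "\<exists>x. ?Q x \<and> (\<forall>y. ?Q y \<longrightarrow> card y \<le> card x)"
      using ex_has_greatest_nat[of ?Q C card "Suc (card P)"] C by blast
    then show ?thesis using that by blast
  qed
  have "maximal_chain P le D"
    unfolding maximal_chain_def
  proof (intro conjI allI impI)
    show "is_chain P le D" using D by simp
    fix E assume E: "is_chain P le E \<and> D \<subseteq> E"
    then have "?Q E" using D by auto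
    then have "card E \<le> card D" using mx by blast
    moreover have "finite E" using E fin by (auto simp: is_chain_def intro: finite_subset)
    ultimately show "E = D" using E card_subset_eq by (metis antisym card_mono)
  qed
  then show ?thesis using D by blast
qed

lemma rank_le_n:
  assumes fp: "finite_poset P le" and rr: "ranked_of_rank P le n" and p: "p \<in> P"
  shows "rk P le p \<le> n"
proof -
  obtain xs where xs: "length xs = Suc (rk P le p)" "set xs \<subseteq> P" "sorted_wrt (strict le) xs" "last xs = p"
    using rank_chain[OF fp p] by blast
  have ch: "is_chain P le (set xs)"
    unfolding is_chain_def
  proof (intro conjI ballI)
    show "set xs \<subseteq> P" by fact
    fix x y assume x: "x \<in> set xs" and y: "y \<in> set xs"
    obtain i where i: "i < length xs" "x = xs ! i" using x by (auto simp: in_set_conv_nth)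
    obtain j where j: "j < length xs" "y = xs ! j" using y by (auto simp: in_set_conv_nth)
    have all: "\<forall>i j. i < j \<longrightarrow> j < length xs \<longrightarrow> strict le (xs ! i) (xs ! j)"
      using xs(3) by (simp only: sorted_wrt_iff_nth_less)
    have xP: "x \<in> P" using x xs(2) by blast
    show "le x y \<or> le y x"
    proof (cases i j rule: linorder_cases)
      case less then show ?thesis using all i j by (simp add: strict_def)
    next
      case equal then show ?thesis using i j xP fp by (simp add: finite_poset_def)
    next
      case greater then show ?thesis using all i j by (simp add: strict_def)
    qed
  qed
  obtain D where D: "maximal_chain P le D" "set xs \<subseteq> D"
    using chain_extend[OF _ ch] fp by (auto simp: finite_poset_def)
  have "card D = Suc n" using rr D(1) by (simp add: ranked_of_rank_def)
  moreover have "finite D" using D(1) fp by (auto simp: maximal_chain_def is_chain_def finite_poset_def intro: finite_subset)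
  moreover have "card (set xs) = Suc (rk P le p)"
    using xs(1) strict_sorted_distinct[OF xs(3)] by (simp add: distinct_card)
  ultimately show ?thesis using card_mono[OF _ D(2)] by simp
qed



definition lvl where "lvl P le i = {p\<in>P. elem_rank P le p = i}"
definition dn where "dn P le i y = {x \<in> lvl P le i. le x y}"
definition cdn :: "nat \<Rightarrow> nat set" where "cdn w = {z\<in>{0,1,2}. crown6_le z w}"

lemma cdn_vals: "cdn 3 = {0,1}" "cdn 4 = {1,2}" "cdn 5 = {0,2}"
  by (auto simp: cdn_def crown6_le_def)

lemma crown_up: "crown6_le z w \<Longrightarrow> z \<noteq> w \<Longrightarrow> z \<in> {0,1,2} \<and> w \<in> {3,4,5}"
  by (auto simp: crown6_le_def)

lemma crown_has_below: "w \<in> {3,4,5::nat} \<Longrightarrow> \<exists>z\<in>{0..5}. z \<noteq> w \<and> crown6_le z w"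
proof -
  assume "w \<in> {3,4,5::nat}"
  then have "w = 3 \<or> w = 4 \<or> w = 5" by auto
  then show ?thesis
  proof (elim disjE)
    assume "w = 3" then show ?thesis by (intro bexI[of _ 0]) (auto simp: crown6_le_def)
  next
    assume "w = 4" then show ?thesis by (intro bexI[of _ 1]) (auto simp: crown6_le_def)
  next
    assume "w = 5" then show ?thesis by (intro bexI[of _ 2]) (auto simp: crown6_le_def)
  qed
qed

lemma slice_eq: "rank_slice P le i (Suc i) = lvl P le i \<union> lvl P le (Suc i)"
  by (auto simp: rank_slice_def lvl_def)

lemma slice_struct:
  assumes fp: "finite_poset P le"
    and iso: "poset_iso (rank_slice P le i (Suc i)) le crown6 crown6_le"
  shows "\<exists>f. inj_on f (lvl P le i \<union> lvl P le (Suc i)) \<and> f ` lvl P le i = {0,1,2}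
     \<and> f ` lvl P le (Suc i) = {3,4,5}
     \<and> (\<forall>x\<in>lvl P le i \<union> lvl P le (Suc i). \<forall>y\<in>lvl P le i \<union> lvl P le (Suc i).
           le x y \<longleftrightarrow> crown6_le (f x) (f y))"
proof -
  let ?S = "lvl P le i \<union> lvl P le (Suc i)"
  obtain f where bij: "bij_betw f ?S {0..5}" and eq: "\<forall>x\<in>?S. \<forall>y\<in>?S. le x y \<longleftrightarrow> crown6_le (f x) (f y)"
    using iso unfolding poset_iso_def slice_eq crown6_def by blast
  have inj: "inj_on f ?S" and img: "f ` ?S = {0..5}" using bij by (auto simp: bij_betw_def)
  have lo: "f a \<in> {0,1,2}" if a: "a \<in> lvl P le i" for a
  proof (rule ccontr)
    assume nz: "f a \<notin> {0,1,2}"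
    have "f a \<in> {0..5}" using img a by blast
    then have "f a \<in> {3,4,5}" using nz by auto
    then obtain z where z: "z \<in> {0..5}" "z \<noteq> f a" "crown6_le z (f a)" using crown_has_below by blast
    obtain w where w: "w \<in> ?S" "z = f w" using z(1) img by (metis imageE)
    have "le w a" using eq w a z by auto
    moreover have "w \<noteq> a" using z w by auto
    moreover have "w \<in> P" "a \<in> P" using w a by (auto simp: lvl_def)
    ultimately have "rk P le w < rk P le a" using rank_mono[OF fp] by blast
    then show False using w a by (auto simp: lvl_def)
  qed
  have hi: "f b \<in> {3,4,5}" if b: "b \<in> lvl P le (Suc i)" for b
  proof -
    have bP: "b \<in> P" and rb: "rk P le b = Suc i" using b by (auto simp: lvl_def)
    obtain q where q: "q\<in>P" "le q b" "q\<noteq>b" "rk P le q = i" using rank_pred[OF fp bP rb] by blast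
    have qS: "q \<in> ?S" using q by (auto simp: lvl_def)
    have "crown6_le (f q) (f b)" using eq qS b q by auto
    moreover have "f q \<noteq> f b" using inj qS b q(3) by (auto dest: inj_onD)
    ultimately show ?thesis using crown_up by blast
  qed
  have i1: "f ` lvl P le i = {0,1,2}"
  proof
    show "f ` lvl P le i \<subseteq> {0,1,2}" using lo by (rule image_subsetI)
    show "{0,1,2} \<subseteq> f ` lvl P le i"
    proof
      fix z assume z: "z \<in> {0,1,2::nat}"
      then have "z \<in> f ` ?S" using img by auto
      then obtain w where w: "w \<in> ?S" "z = f w" by blast
      have "w \<notin> lvl P le (Suc i)"
      proof
        assume "w \<in> lvl P le (Suc i)"
        then have "f w \<in> {3,4,5}" by (rule hi)
        then show False using w(2) z by auto
      qed
      then show "z \<in> f ` lvl P le i" using w by blast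
    qed
  qed
  have i2: "f ` lvl P le (Suc i) = {3,4,5}"
  proof
    show "f ` lvl P le (Suc i) \<subseteq> {3,4,5}" using hi by (rule image_subsetI)
    show "{3,4,5} \<subseteq> f ` lvl P le (Suc i)"
    proof
      fix z assume z: "z \<in> {3,4,5::nat}"
      then have "z \<in> f ` ?S" using img by auto
      then obtain w where w: "w \<in> ?S" "z = f w" by blast
      have "w \<notin> lvl P le i"
      proof
        assume "w \<in> lvl P le i"
        then have "f w \<in> {0,1,2}" by (rule lo)
        then show False using w(2) z by auto
      qed
      then show "z \<in> f ` lvl P le (Suc i)" using w by blast
    qed
  qed
  show ?thesis using inj i1 i2 eq by blast
qed

lemma level_facts:
  assumes fp: "finite_poset P le"
    and iso: "poset_iso (rank_slice P le i (Suc i)) le crown6 crown6_le"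
  shows "card (lvl P le i) = 3 \<and> card (lvl P le (Suc i)) = 3
    \<and> bij_betw (dn P le i) (lvl P le (Suc i)) {S. S \<subseteq> lvl P le i \<and> card S = 2}"
proof -
  let ?L = "lvl P le i" and ?U = "lvl P le (Suc i)"
  obtain f where inj: "inj_on f (?L \<union> ?U)" and i1: "f ` ?L = {0,1,2}" and i2: "f ` ?U = {3,4,5}"
    and eq: "\<forall>x\<in>?L \<union> ?U. \<forall>y\<in>?L \<union> ?U. le x y \<longleftrightarrow> crown6_le (f x) (f y)"
    using slice_struct[OF fp iso] by metis
  have injL: "inj_on f ?L" using inj_on_subset[OF inj, of ?L] by blast
  have injU: "inj_on f ?U" using inj_on_subset[OF inj, of ?U] by blast
  have cL: "card ?L = 3" using card_image[OF injL] i1 by simp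
  have cU: "card ?U = 3" using card_image[OF injU] i2 by simp
  have finL: "finite ?L" using cL by (intro card_ge_0_finite) simp
  have fdn: "f ` dn P le i y = cdn (f y)" if y: "y \<in> ?U" for y
  proof
    show "f ` dn P le i y \<subseteq> cdn (f y)"
    proof
      fix z assume "z \<in> f ` dn P le i y"
      then obtain x where x: "x \<in> ?L" "le x y" "z = f x" by (auto simp: dn_def)
      have "f x \<in> {0,1,2}" using i1 x(1) by blast
      moreover have "crown6_le (f x) (f y)" using eq y x by blast
      ultimately show "z \<in> cdn (f y)" using x(3) unfolding cdn_def by blast
    qed
    show "cdn (f y) \<subseteq> f ` dn P le i y"
    proof
      fix z assume z: "z \<in> cdn (f y)"
      then have "z \<in> f ` ?L" using i1 by (simp add: cdn_def)
      then obtain x where x: "x \<in> ?L" "z = f x" by blast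
      then have "le x y" using eq y z by (simp add: cdn_def)
      then show "z \<in> f ` dn P le i y" using x by (auto simp: dn_def)
    qed
  qed
  have dnL: "dn P le i y \<subseteq> ?L" for y by (auto simp: dn_def)
  have cdn2: "card (cdn w) = 2" if "w \<in> {3,4,5}" for w
  proof -
    have "w = 3 \<or> w = 4 \<or> w = 5" using that by simp
    then show ?thesis by (elim disjE) (simp_all add: cdn_vals)
  qed
  have cdn_det: "w = (if 2 \<notin> cdn w then 3 else if 0 \<notin> cdn w then 4 else 5)" if "w \<in> {3,4,5}" for w
  proof -
    have "w = 3 \<or> w = 4 \<or> w = 5" using that by simp
    then show ?thesis by (elim disjE) (simp_all add: cdn_vals)
  qed
  have cdn_inj: "w = w'" if "w \<in> {3,4,5}" "w' \<in> {3,4,5}" "cdn w = cdn w'" for w w'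
  proof -
    have "w = (if 2 \<notin> cdn w then 3 else if 0 \<notin> cdn w then 4 else 5)" by (rule cdn_det[OF that(1)])
    also have "\<dots> = (if 2 \<notin> cdn w' then 3 else if 0 \<notin> cdn w' then 4 else 5)" by (simp only: that(3))
    also have "\<dots> = w'" by (rule cdn_det[OF that(2), symmetric])
    finally show ?thesis .
  qed
  have card2: "card (dn P le i y) = 2" if y: "y \<in> ?U" for y
  proof -
    have "card (dn P le i y) = card (f ` dn P le i y)"
      using inj_on_subset[OF injL dnL] by (simp add: card_image)
    also have "\<dots> = card (cdn (f y))" using fdn[OF y] by simp
    also have "\<dots> = 2" using cdn2 i2 y by blast
    finally show ?thesis .
  qed
  have injdn: "inj_on (dn P le i) ?U"
  proof (rule inj_onI)
    fix y1 y2 assume y: "y1 \<in> ?U" "y2 \<in> ?U" "dn P le i y1 = dn P le i y2"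
    then have "cdn (f y1) = cdn (f y2)" using fdn[OF y(1)] fdn[OF y(2)] by simp
    then have "f y1 = f y2" using cdn_inj i2 y by blast
    then show "y1 = y2" using injU y by (auto dest: inj_onD)
  qed
  have sub: "dn P le i ` ?U \<subseteq> {S. S \<subseteq> ?L \<and> card S = 2}"
  proof (rule image_subsetI)
    fix y assume "y \<in> ?U"
    then show "dn P le i y \<in> {S. S \<subseteq> ?L \<and> card S = 2}" using dnL card2 by blast
  qed
  have "card (dn P le i ` ?U) = 3" using card_image[OF injdn] cU by simp
  moreover have "card {S. S \<subseteq> ?L \<and> card S = 2} = 3" using n_subsets[OF finL, of 2] cL by (simp add: choose_two)
  moreover have "finite {S. S \<subseteq> ?L \<and> card S = 2}" using finL by simp
  ultimately have "dn P le i ` ?U = {S. S \<subseteq> ?L \<and> card S = 2}"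
    using sub card_subset_eq by metis
  then show ?thesis using cL cU injdn by (simp add: bij_betw_def)
qed



definition stack_props :: "'a set \<Rightarrow> ('a \<Rightarrow> 'a \<Rightarrow> bool) \<Rightarrow> nat \<Rightarrow> bool" where
  "stack_props P le n \<longleftrightarrow> finite_poset P le \<and> (\<forall>p\<in>P. rk P le p \<le> n)
    \<and> (\<forall>i\<le>n. card (lvl P le i) = 3)
    \<and> (\<forall>a\<in>P. \<forall>b\<in>P. le a b \<and> a \<noteq> b \<longrightarrow> rk P le a < rk P le b)
    \<and> (\<forall>a\<in>P. \<forall>b\<in>P. rk P le a + 2 \<le> rk P le b \<longrightarrow> le a b)
    \<and> (\<forall>i<n. bij_betw (dn P le i) (lvl P le (Suc i)) {S. S \<subseteq> lvl P le i \<and> card S = 2})"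

lemma fp_trans: "finite_poset P le \<Longrightarrow> a \<in> P \<Longrightarrow> b \<in> P \<Longrightarrow> c \<in> P \<Longrightarrow> le a b \<Longrightarrow> le b c \<Longrightarrow> le a c"
  unfolding finite_poset_def by blast

lemma jump:
  assumes fp: "finite_poset P le" and rkle: "\<forall>p\<in>P. rk P le p \<le> n"
    and c3: "\<forall>i\<le>n. card (lvl P le i) = 3"
    and bj: "\<forall>i<n. bij_betw (dn P le i) (lvl P le (Suc i)) {S. S \<subseteq> lvl P le i \<and> card S = 2}"
    and a: "a \<in> P"
  shows "b \<in> P \<Longrightarrow> rk P le b = rk P le a + 2 + d \<Longrightarrow> le a b"
proof (induction d arbitrary: b)
  case 0
  define i where "i = rk P le a"
  have bn: "rk P le b \<le> n" using rkle 0 by blast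
  then have i1: "Suc i < n" using 0 unfolding i_def by simp
  have bl: "b \<in> lvl P le (Suc (Suc i))" using 0 unfolding i_def by (simp add: lvl_def)
  have "dn P le (Suc i) b \<in> {S. S \<subseteq> lvl P le (Suc i) \<and> card S = 2}"
    using bj i1 bl by (meson bij_betwE)
  then have "card (dn P le (Suc i) b) = 2" by simp
  then obtain y1 y2 where y: "y1 \<noteq> y2" "dn P le (Suc i) b = {y1, y2}" by (meson card_2_iff)
  have yl: "y1 \<in> lvl P le (Suc i)" "y2 \<in> lvl P le (Suc i)" "le y1 b" "le y2 b"
    using y(2) unfolding dn_def by blast+
  have ii: "i < n" using i1 by simp
  have bji: "bij_betw (dn P le i) (lvl P le (Suc i)) {S. S \<subseteq> lvl P le i \<and> card S = 2}"
    using bj ii by blast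
  have d1: "dn P le i y1 \<subseteq> lvl P le i" "card (dn P le i y1) = 2"
    using bij_betwE[OF bji] yl(1) by auto
  have d2: "dn P le i y2 \<subseteq> lvl P le i" "card (dn P le i y2) = 2"
    using bij_betwE[OF bji] yl(2) by auto
  have dne: "dn P le i y1 \<noteq> dn P le i y2"
    using bij_betw_imp_inj_on[OF bji] yl(1,2) y(1) by (meson inj_onD)
  define U where "U = dn P le i y1 \<union> dn P le i y2"
  have cL: "card (lvl P le i) = 3" using c3 ii by simp
  have finL: "finite (lvl P le i)" using cL by (intro card_ge_0_finite) simp
  have UL: "U \<subseteq> lvl P le i" using d1 d2 unfolding U_def by blast
  have finU: "finite U" using finite_subset[OF UL finL] .
  have "card U \<le> 3" using card_mono[OF finL UL] cL by simp
  moreover have "card U \<ge> 2" using card_mono[OF finU, of "dn P le i y1"] d1 unfolding U_def by simp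
  moreover have "card U \<noteq> 2"
  proof
    assume c2: "card U = 2"
    have "dn P le i y1 = U" using card_subset_eq[OF finU, of "dn P le i y1"] d1 c2 unfolding U_def by simp
    moreover have "dn P le i y2 = U" using card_subset_eq[OF finU, of "dn P le i y2"] d2 c2 unfolding U_def by simp
    ultimately show False using dne by simp
  qed
  ultimately have "card U = card (lvl P le i)" using cL by simp
  then have "U = lvl P le i" using card_subset_eq[OF finL UL] by simp
  moreover have "a \<in> lvl P le i" using a unfolding lvl_def i_def by simp
  ultimately have "le a y1 \<or> le a y2" unfolding U_def dn_def by blast
  moreover have "y1 \<in> P" "y2 \<in> P" using yl by (auto simp: lvl_def)
  ultimately show ?case using fp_trans[OF fp] a 0(1) yl(3,4) by blast
next
  case (Suc d)
  obtain c where c: "c \<in> P" "le c b" "rk P le c = rk P le a + 2 + d"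
    using rank_pred[OF fp Suc(2)] Suc(3) by auto
  have "le a c" using Suc.IH c by blast
  then show ?case using fp_trans[OF fp a c(1) Suc(2)] c(2) by blast
qed

lemma six_props:
  assumes st: "six_stack P le n"
  shows "stack_props P le n"
proof -
  have fp: "finite_poset P le" and n1: "n \<ge> 1" and rr: "ranked_of_rank P le n"
    and isos: "\<forall>i<n. poset_iso (rank_slice P le i (Suc i)) le crown6 crown6_le"
    using st unfolding six_stack_def by auto
  have rkle: "\<forall>p\<in>P. rk P le p \<le> n" using rank_le_n[OF fp rr] by blast
  have c3: "\<forall>i\<le>n. card (lvl P le i) = 3"
  proof (intro allI impI)
    fix i assume i: "i \<le> n"
    show "card (lvl P le i) = 3"
    proof (cases "i < n")
      case True then show ?thesis using level_facts[OF fp] isos by blast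
    next
      case False
      then have "i = Suc (n - 1)" using i n1 by simp
      moreover have "n - 1 < n" using n1 by simp
      ultimately show ?thesis using level_facts[OF fp, of "n - 1"] isos by metis
    qed
  qed
  have bj: "\<forall>i<n. bij_betw (dn P le i) (lvl P le (Suc i)) {S. S \<subseteq> lvl P le i \<and> card S = 2}"
    using level_facts[OF fp] isos by blast
  have mono: "\<forall>a\<in>P. \<forall>b\<in>P. le a b \<and> a \<noteq> b \<longrightarrow> rk P le a < rk P le b"
    using rank_mono[OF fp] by blast
  have jp: "\<forall>a\<in>P. \<forall>b\<in>P. rk P le a + 2 \<le> rk P le b \<longrightarrow> le a b"
  proof (intro ballI impI)
    fix a b assume a: "a \<in> P" and b: "b \<in> P" and r: "rk P le a + 2 \<le> rk P le b"
    then obtain d where "rk P le b = rk P le a + 2 + d" using le_Suc_ex by blast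
    then show "le a b" using jump[OF fp rkle c3 bj a b] by blast
  qed
  show ?thesis unfolding stack_props_def using fp rkle c3 mono jp bj by blast
qed



lemma sp_fp: "stack_props P le n \<Longrightarrow> finite_poset P le"
  by (simp add: stack_props_def)
lemma sp_rkle: "stack_props P le n \<Longrightarrow> p \<in> P \<Longrightarrow> rk P le p \<le> n"
  by (simp add: stack_props_def)
lemma sp_c3: "stack_props P le n \<Longrightarrow> i \<le> n \<Longrightarrow> card (lvl P le i) = 3"
  by (simp add: stack_props_def)
lemma sp_bij: "stack_props P le n \<Longrightarrow> i < n \<Longrightarrow>
   bij_betw (dn P le i) (lvl P le (Suc i)) {S. S \<subseteq> lvl P le i \<and> card S = 2}"
  by (simp add: stack_props_def)
lemma sp_jump: "stack_props P le n \<Longrightarrow> x \<in> P \<Longrightarrow> y \<in> P \<Longrightarrow> rk P le x + 2 \<le> rk P le y \<Longrightarrow> le x y"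
  by (simp add: stack_props_def)
lemma sp_mono: "stack_props P le n \<Longrightarrow> x \<in> P \<Longrightarrow> y \<in> P \<Longrightarrow> le x y \<Longrightarrow> x \<noteq> y \<Longrightarrow> rk P le x < rk P le y"
  unfolding stack_props_def by blast
lemma sp_same:
  assumes SP: "stack_props P le n" and x: "x \<in> P" and y: "y \<in> P" and r: "rk P le x = rk P le y"
  shows "le x y \<longleftrightarrow> x = y"
proof
  assume l: "le x y"
  show "x = y"
  proof (rule ccontr)
    assume "x \<noteq> y"
    then have "rk P le x < rk P le y" using sp_mono[OF SP x y l] by blast
    then show False using r by simp
  qed
next
  assume "x = y"
  then show "le x y" using sp_fp[OF SP] x unfolding finite_poset_def by blast
qed

lemma sp_down:
  assumes SP: "stack_props P le n" and x: "x \<in> P" and y: "y \<in> P" and r: "rk P le y < rk P le x"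
  shows "\<not> le x y"
proof
  assume l: "le x y"
  have "x \<noteq> y" using r by auto
  then have "rk P le x < rk P le y" using sp_mono[OF SP x y l] by blast
  then show False using r by simp
qed

lemma iso_step:
  assumes SP: "stack_props P le n" and SQ: "stack_props Q le' n" and k: "Suc k \<le> n"
    and f: "bij_betw f {p\<in>P. rk P le p \<le> k} {q\<in>Q. rk Q le' q \<le> k}"
    and fr: "\<forall>p\<in>{p\<in>P. rk P le p \<le> k}. rk Q le' (f p) = rk P le p"
    and fo: "\<forall>x\<in>{p\<in>P. rk P le p \<le> k}. \<forall>y\<in>{p\<in>P. rk P le p \<le> k}. le x y \<longleftrightarrow> le' (f x) (f y)"
  shows "\<exists>g. bij_betw g {p\<in>P. rk P le p \<le> Suc k} {q\<in>Q. rk Q le' q \<le> Suc k}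
     \<and> (\<forall>p\<in>{p\<in>P. rk P le p \<le> Suc k}. rk Q le' (g p) = rk P le p)
     \<and> (\<forall>x\<in>{p\<in>P. rk P le p \<le> Suc k}. \<forall>y\<in>{p\<in>P. rk P le p \<le> Suc k}. le x y \<longleftrightarrow> le' (g x) (g y))"
proof -
  let ?R = "rk P le" and ?R' = "rk Q le'"
  let ?U = "{p\<in>P. ?R p \<le> k}" and ?V = "{q\<in>Q. ?R' q \<le> k}"
  let ?L = "lvl P le k" and ?L1 = "lvl P le (Suc k)"
  let ?M = "lvl Q le' k" and ?M1 = "lvl Q le' (Suc k)"
  have kn: "k < n" using k by simp
  have bP: "bij_betw (dn P le k) ?L1 {S. S \<subseteq> ?L \<and> card S = 2}" using sp_bij[OF SP kn] .
  have bQ: "bij_betw (dn Q le' k) ?M1 {S. S \<subseteq> ?M \<and> card S = 2}" using sp_bij[OF SQ kn] .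
  have injf: "inj_on f ?U" using f by (simp add: bij_betw_def)
  have imgf: "f ` ?U = ?V" using f by (simp add: bij_betw_def)
  have LU: "?L \<subseteq> ?U" by (auto simp: lvl_def)
  have injL: "inj_on f ?L" using inj_on_subset[OF injf LU] .
  have fL: "f ` ?L = ?M"
  proof
    show "f ` ?L \<subseteq> ?M"
    proof (rule image_subsetI)
      fix p assume p: "p \<in> ?L"
      then have "p \<in> ?U" using LU by blast
      then have "f p \<in> f ` ?U" by (rule imageI)
      then have "f p \<in> ?V" using imgf by simp
      have "?R' (f p) = ?R p" using fr \<open>p \<in> ?U\<close> by blast
      note this \<open>f p \<in> ?V\<close>
      then show "f p \<in> ?M" using p unfolding lvl_def by simp
    qed
    show "?M \<subseteq> f ` ?L"
    proof
      fix q assume q: "q \<in> ?M"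
      then have "q \<in> ?V" by (auto simp: lvl_def)
      then have "q \<in> f ` ?U" using imgf by simp
      then obtain p where p: "p \<in> ?U" "q = f p" by (rule imageE) simp
      then have "?R' (f p) = ?R p" using fr by blast
      moreover have "?R' q = k" using q by (simp add: lvl_def)
      ultimately have "?R p = k" using p(2) by simp
      then have "p \<in> ?L" using p(1) by (simp add: lvl_def)
      then show "q \<in> f ` ?L" using p(2) by blast
    qed
  qed
  have dnL: "dn P le k y \<subseteq> ?L" for y by (auto simp: dn_def)
  define h where "h y = inv_into ?M1 (dn Q le' k) (f ` dn P le k y)" for y
  have fdn_in: "f ` dn P le k y \<in> dn Q le' k ` ?M1" if y: "y \<in> ?L1" for y
  proof -
    have "dn P le k y \<in> {S. S \<subseteq> ?L \<and> card S = 2}" using bij_betwE[OF bP] y by blast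
    then have c2: "card (dn P le k y) = 2" by simp
    have "card (f ` dn P le k y) = 2" using card_image[OF inj_on_subset[OF injL dnL]] c2 by simp
    moreover have "f ` dn P le k y \<subseteq> ?M" using image_mono[OF dnL, of f] fL by simp
    ultimately have "f ` dn P le k y \<in> {S. S \<subseteq> ?M \<and> card S = 2}" by simp
    moreover have "dn Q le' k ` ?M1 = {S. S \<subseteq> ?M \<and> card S = 2}" using bQ by (simp add: bij_betw_def)
    ultimately show ?thesis by simp
  qed
  have hM: "h y \<in> ?M1" if "y \<in> ?L1" for y
    unfolding h_def using inv_into_into[OF fdn_in[OF that]] .
  have hdn: "dn Q le' k (h y) = f ` dn P le k y" if "y \<in> ?L1" for y
    unfolding h_def using f_inv_into_f[OF fdn_in[OF that]] .
  have injh: "inj_on h ?L1"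
  proof (rule inj_onI)
    fix y1 y2 assume y: "y1 \<in> ?L1" "y2 \<in> ?L1" "h y1 = h y2"
    then have "f ` dn P le k y1 = f ` dn P le k y2" using hdn[OF y(1)] hdn[OF y(2)] by simp
    then have "dn P le k y1 = dn P le k y2" using inj_on_image_eq_iff[OF injL dnL dnL] by blast
    then show "y1 = y2" using bij_betw_imp_inj_on[OF bP] y by (meson inj_onD)
  qed
  have c3L1: "card ?L1 = 3" using sp_c3[OF SP k] .
  have c3M1: "card ?M1 = 3" using sp_c3[OF SQ k] .
  have finM1: "finite ?M1" using c3M1 by (intro card_ge_0_finite) simp
  have hsub: "h ` ?L1 \<subseteq> ?M1" using hM by blast
  have "card (h ` ?L1) = card ?M1" using card_image[OF injh] c3L1 c3M1 by simp
  then have himg: "h ` ?L1 = ?M1" using card_subset_eq[OF finM1 hsub] by simp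
  define g where "g p = (if ?R p \<le> k then f p else h p)" for p
  have "bij_betw g ?U ?V = bij_betw f ?U ?V" by (rule bij_betw_cong) (simp add: g_def)
  then have bg1: "bij_betw g ?U ?V" using f by simp
  have bg2: "bij_betw g ?L1 ?M1"
  proof -
    have "bij_betw h ?L1 ?M1" using injh himg by (simp add: bij_betw_def)
    moreover have "bij_betw g ?L1 ?M1 = bij_betw h ?L1 ?M1" by (rule bij_betw_cong) (simp add: g_def lvl_def)
    ultimately show ?thesis by simp
  qed
  have disj: "?V \<inter> ?M1 = {}" by (auto simp: lvl_def)
  have eqU: "{p\<in>P. ?R p \<le> Suc k} = ?U \<union> ?L1" by (auto simp: lvl_def)
  have eqV: "{q\<in>Q. ?R' q \<le> Suc k} = ?V \<union> ?M1" by (auto simp: lvl_def)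
  have bg: "bij_betw g {p\<in>P. ?R p \<le> Suc k} {q\<in>Q. ?R' q \<le> Suc k}"
    unfolding eqU eqV by (rule bij_betw_combine[OF bg1 bg2 disj])
  have gU: "g p = f p" if "p \<in> ?U" for p using that by (simp add: g_def)
  have gL1: "g p = h p" if "p \<in> ?L1" for p using that by (simp add: g_def lvl_def)
  have gr: "?R' (g p) = ?R p" if p: "p \<in> ?U \<union> ?L1" for p
  proof (cases "p \<in> ?U")
    case True then show ?thesis using gU fr by simp
  next
    case False
    then have pL: "p \<in> ?L1" using p by blast
    then have "g p \<in> ?M1" using gL1 hM by simp
    then show ?thesis using pL by (simp add: lvl_def)
  qed
  have gQ: "g p \<in> Q" if "p \<in> ?U \<union> ?L1" for p
  proof -
    have "p \<in> {p\<in>P. ?R p \<le> Suc k}" using that unfolding eqU .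
    then have "g p \<in> {q\<in>Q. ?R' q \<le> Suc k}" using bij_betwE[OF bg] by blast
    then show ?thesis by simp
  qed
  have go: "le x y \<longleftrightarrow> le' (g x) (g y)" if x: "x \<in> ?U \<union> ?L1" and y: "y \<in> ?U \<union> ?L1" for x y
  proof -
    have xP: "x \<in> P" and yP: "y \<in> P" using x y by (auto simp: lvl_def)
    have gxQ: "g x \<in> Q" and gyQ: "g y \<in> Q" using gQ x y by auto
    have rx: "?R' (g x) = ?R x" and ry: "?R' (g y) = ?R y" using gr x y by auto
    show ?thesis
    proof (cases "x \<in> ?U")
      case xU: True
      show ?thesis
      proof (cases "y \<in> ?U")
        case True then show ?thesis using fo xU gU by simp
      next
        case False
        then have yL: "y \<in> ?L1" using y by blast
        then have ryk: "?R y = Suc k" by (simp add: lvl_def)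
        show ?thesis
        proof (cases "?R x + 2 \<le> Suc k")
          case True
          then have "le x y" using sp_jump[OF SP xP yP] ryk by simp
          moreover have "le' (g x) (g y)" using sp_jump[OF SQ gxQ gyQ] True rx ry ryk by simp
          ultimately show ?thesis by simp
        next
          case False
          then have xL: "x \<in> ?L" using xU by (simp add: lvl_def)
          have "le x y \<longleftrightarrow> x \<in> dn P le k y" using xL by (simp add: dn_def)
          also have "\<dots> \<longleftrightarrow> f x \<in> f ` dn P le k y"
            using inj_on_image_mem_iff[OF injL xL dnL] by simp
          also have "\<dots> \<longleftrightarrow> f x \<in> dn Q le' k (h y)" using hdn[OF yL] by simp
          also have "\<dots> \<longleftrightarrow> le' (f x) (h y)" using fL xL by (auto simp: dn_def)
          finally show ?thesis using gU[OF xU] gL1[OF yL] by simp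
        qed
      qed
    next
      case False
      then have xL: "x \<in> ?L1" using x by blast
      then have rxk: "?R x = Suc k" by (simp add: lvl_def)
      show ?thesis
      proof (cases "y \<in> ?U")
        case True
        then have "?R y < ?R x" using rxk by simp
        then show ?thesis using sp_down[OF SP xP yP] sp_down[OF SQ gxQ gyQ] rx ry by simp
      next
        case False
        then have yL: "y \<in> ?L1" using y by blast
        then have "?R y = ?R x" using rxk by (simp add: lvl_def)
        then have "le x y \<longleftrightarrow> x = y" using sp_same[OF SP xP yP] by simp
        also have "\<dots> \<longleftrightarrow> g x = g y" using bij_betw_imp_inj_on[OF bg2] xL yL by (meson inj_onD)
        also have "\<dots> \<longleftrightarrow> le' (g x) (g y)" using sp_same[OF SQ gxQ gyQ] rx ry \<open>?R y = ?R x\<close> by simp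
        finally show ?thesis .
      qed
    qed
  qed
  show ?thesis using bg gr go unfolding eqU by blast
qed

lemma stack_iso:
  assumes SP: "stack_props P le n" and SQ: "stack_props Q le' n"
  shows "poset_iso P le Q le'"
proof -
  have main: "k \<le> n \<Longrightarrow> \<exists>f. bij_betw f {p\<in>P. rk P le p \<le> k} {q\<in>Q. rk Q le' q \<le> k}
     \<and> (\<forall>p\<in>{p\<in>P. rk P le p \<le> k}. rk Q le' (f p) = rk P le p)
     \<and> (\<forall>x\<in>{p\<in>P. rk P le p \<le> k}. \<forall>y\<in>{p\<in>P. rk P le p \<le> k}. le x y \<longleftrightarrow> le' (f x) (f y))" for k
  proof (induction k)
    case 0
    have eP: "{p\<in>P. rk P le p \<le> 0} = lvl P le 0" by (auto simp: lvl_def)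
    have eQ: "{q\<in>Q. rk Q le' q \<le> 0} = lvl Q le' 0" by (auto simp: lvl_def)
    have c1: "card (lvl P le 0) = 3" using sp_c3[OF SP] by simp
    have c2: "card (lvl Q le' 0) = 3" using sp_c3[OF SQ] by simp
    have f1: "finite (lvl P le 0)" using c1 by (intro card_ge_0_finite) simp
    have f2: "finite (lvl Q le' 0)" using c2 by (intro card_ge_0_finite) simp
    obtain f where bf: "bij_betw f (lvl P le 0) (lvl Q le' 0)"
      using finite_same_card_bij[OF f1 f2] c1 c2 by auto
    have r: "\<forall>p\<in>lvl P le 0. rk Q le' (f p) = rk P le p"
      using bij_betwE[OF bf] by (auto simp: lvl_def)
    have o: "\<forall>x\<in>lvl P le 0. \<forall>y\<in>lvl P le 0. le x y \<longleftrightarrow> le' (f x) (f y)"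
    proof (intro ballI)
      fix x y assume x: "x \<in> lvl P le 0" and y: "y \<in> lvl P le 0"
      have fx: "f x \<in> lvl Q le' 0" and fy: "f y \<in> lvl Q le' 0" using bij_betwE[OF bf] x y by auto
      have "le x y \<longleftrightarrow> x = y" using sp_same[OF SP] x y by (auto simp: lvl_def)
      also have "\<dots> \<longleftrightarrow> f x = f y" using bij_betw_imp_inj_on[OF bf] x y by (meson inj_onD)
      also have "\<dots> \<longleftrightarrow> le' (f x) (f y)" using sp_same[OF SQ] fx fy by (auto simp: lvl_def)
      finally show "le x y \<longleftrightarrow> le' (f x) (f y)" .
    qed
    show ?case unfolding eP eQ using bf r o by blast
  next
    case (Suc k)
    then obtain f where "bij_betw f {p\<in>P. rk P le p \<le> k} {q\<in>Q. rk Q le' q \<le> k}"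
     "\<forall>p\<in>{p\<in>P. rk P le p \<le> k}. rk Q le' (f p) = rk P le p"
     "\<forall>x\<in>{p\<in>P. rk P le p \<le> k}. \<forall>y\<in>{p\<in>P. rk P le p \<le> k}. le x y \<longleftrightarrow> le' (f x) (f y)"
      by auto
    then show ?case using iso_step[OF SP SQ Suc(2)] by blast
  qed
  have eP: "{p\<in>P. rk P le p \<le> n} = P" using sp_rkle[OF SP] by auto
  have eQ: "{q\<in>Q. rk Q le' q \<le> n} = Q" using sp_rkle[OF SQ] by auto
  show ?thesis using main[of n] unfolding eP eQ poset_iso_def by blast
qed



definition crel :: "nat \<Rightarrow> nat \<Rightarrow> bool" where
  "crel r s \<longleftrightarrow> s = r \<or> s = (r + 2) mod 3"

definition sle :: "nat \<Rightarrow> nat \<Rightarrow> bool" where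
  "sle a b \<longleftrightarrow> a = b \<or> a div 3 + 2 \<le> b div 3 \<or> (b div 3 = a div 3 + 1 \<and> crel (a mod 3) (b mod 3))"

definition SPn :: "nat \<Rightarrow> nat set" where
  "SPn n = {..<3 * Suc n}"

lemma sle_strict: "sle a b \<Longrightarrow> a \<noteq> b \<Longrightarrow> a div 3 < b div 3"
  unfolding sle_def by auto

lemma sle_fp: "finite_poset (SPn n) sle"
  unfolding finite_poset_def
proof (intro conjI ballI impI)
  show "finite (SPn n)" by (simp add: SPn_def)
  fix x assume "x \<in> SPn n" then show "sle x x" by (simp add: sle_def)
next
  fix x y assume "x \<in> SPn n" "y \<in> SPn n" and h: "sle x y \<and> sle y x"
  show "x = y"
  proof (rule ccontr)
    assume "x \<noteq> y"
    then have "x div 3 < y div 3" "y div 3 < x div 3" using h sle_strict by auto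
    then show False by simp
  qed
next
  fix x y z assume "x \<in> SPn n" "y \<in> SPn n" "z \<in> SPn n" and h: "sle x y \<and> sle y z"
  show "sle x z"
  proof (cases "x = y \<or> y = z")
    case True then show ?thesis using h by auto
  next
    case False
    then have "x div 3 < y div 3" "y div 3 < z div 3" using h sle_strict by auto
    then show ?thesis unfolding sle_def by simp
  qed
qed

lemma sorted_below_last: "sorted_wrt R xs \<Longrightarrow> x \<in> set xs \<Longrightarrow> x \<noteq> last xs \<Longrightarrow> R x (last xs)"
proof (induction xs)
  case Nil then show ?case by simp
next
  case (Cons y ys)
  show ?case
  proof (cases "ys = []")
    case True then show ?thesis using Cons by simp
  next
    case False
    have "last (y # ys) = last ys" using False by simp
    moreover have "last ys \<in> set ys" using False by simp
    ultimately show ?thesis using Cons False by auto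
  qed
qed

lemma sle_chain_bound:
  assumes s: "sorted_wrt (strict sle) xs" and l: "last xs = a" and ne: "xs \<noteq> []"
  shows "length xs \<le> Suc (a div 3)"
proof -
  have s2: "sorted_wrt (\<lambda>x y. x div 3 < y div 3) xs"
    using s by (rule sorted_wrt_mono_rel[rotated]) (auto simp: strict_def intro: sle_strict)
  then have "sorted_wrt (<) (map (\<lambda>x. x div 3) xs)" by (simp add: sorted_wrt_map)
  then have d: "distinct (map (\<lambda>x. x div 3) xs)" by (simp add: strict_sorted_iff)
  have sub: "set (map (\<lambda>x. x div 3) xs) \<subseteq> {..a div 3}"
  proof
    fix v assume "v \<in> set (map (\<lambda>x. x div 3) xs)"
    then obtain x where x: "x \<in> set xs" "v = x div 3" by auto
    show "v \<in> {..a div 3}"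
    proof (cases "x = a")
      case True then show ?thesis using x by simp
    next
      case False
      then have "strict sle x a" using sorted_below_last[OF s x(1)] l by simp
      then show ?thesis using x sle_strict by (force simp: strict_def)
    qed
  qed
  have "length xs = card (set (map (\<lambda>x. x div 3) xs))" using d distinct_card by fastforce
  also have "\<dots> \<le> card {..a div 3}" using sub by (intro card_mono) auto
  finally show ?thesis by simp
qed

lemma sle_rank:
  assumes a: "a \<in> SPn n"
  shows "elem_rank (SPn n) sle a = a div 3"
proof (rule antisym)
  obtain xs where xs: "length xs = Suc (elem_rank (SPn n) sle a)" "set xs \<subseteq> SPn n"
      "sorted_wrt (strict sle) xs" "last xs = a"
    using rank_chain[OF sle_fp a] by blast
  have "xs \<noteq> []" using xs(1) by auto
  then show "elem_rank (SPn n) sle a \<le> a div 3" using sle_chain_bound[OF xs(3,4)] xs(1) by simp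
next
  define xs where "xs = map (\<lambda>j. 3 * j + a mod 3) [0..<Suc (a div 3)]"
  show "a div 3 \<le> elem_rank (SPn n) sle a"
  proof (rule rank_ge[OF sle_fp, of xs])
    show "length xs = Suc (a div 3)" by (simp add: xs_def)
    have "a div 3 \<le> n" using a by (auto simp: SPn_def)
    then show "set xs \<subseteq> SPn n" by (auto simp: xs_def SPn_def)
    show "sorted_wrt (strict sle) xs"
      unfolding xs_def sorted_wrt_map
    proof (rule sorted_wrt_mono_rel[OF _ sorted_wrt_upt])
      fix i j assume "i \<in> set [0..<Suc (a div 3)]" "j \<in> set [0..<Suc (a div 3)]" "i < j"
      then show "strict sle (3 * i + a mod 3) (3 * j + a mod 3)"
        unfolding strict_def sle_def crel_def by auto
    qed
    show "last xs = a" by (simp add: xs_def)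
  qed
qed



lemma crel_both: "r < 3 \<Longrightarrow> s < 3 \<Longrightarrow> \<exists>t<3. crel r t \<and> crel t s"
proof -
  assume "r < 3" "s < 3"
  then have "r \<in> {0,1,2}" "s \<in> {0,1,2}" by auto
  then show ?thesis
    by (auto simp: crel_def intro: exI[of _ 0] exI[of _ 1] exI[of _ 2])
qed

lemma sle_ranked: "ranked_of_rank (SPn n) sle n"
  unfolding ranked_of_rank_def
proof (intro allI impI)
  fix C assume mc: "maximal_chain (SPn n) sle C"
  have ch: "is_chain (SPn n) sle C" using mc by (simp add: maximal_chain_def)
  have CS: "C \<subseteq> SPn n" using ch by (simp add: is_chain_def)
  have cmp: "sle x y \<or> sle y x" if "x \<in> C" "y \<in> C" for x y using ch that by (simp add: is_chain_def)
  have uniq: "x = y" if "x \<in> C" "y \<in> C" "x div 3 = y div 3" for x y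
  proof (rule ccontr)
    assume "x \<noteq> y"
    then show False using cmp[OF that(1,2)] sle_strict that(3) by fastforce
  qed
  have inj: "inj_on (\<lambda>x. x div 3) C" using uniq by (auto intro: inj_onI)
  have img: "(\<lambda>x. x div 3) ` C = {..n}"
  proof
    show "(\<lambda>x. x div 3) ` C \<subseteq> {..n}" using CS by (auto simp: SPn_def)
    show "{..n} \<subseteq> (\<lambda>x. x div 3) ` C"
    proof
      fix k assume kn: "k \<in> {..n}"
      show "k \<in> (\<lambda>x. x div 3) ` C"
      proof (rule ccontr)
        assume nk: "k \<notin> (\<lambda>x. x div 3) ` C"
        have "\<exists>t<3. (\<forall>x\<in>C. x div 3 + 1 = k \<longrightarrow> crel (x mod 3) t) \<and> (\<forall>x\<in>C. x div 3 = k + 1 \<longrightarrow> crel t (x mod 3))"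
        proof (cases "\<exists>a\<in>C. a div 3 + 1 = k")
          case True
          then obtain a where a: "a \<in> C" "a div 3 + 1 = k" by blast
          have alo: "x = a" if "x \<in> C" "x div 3 + 1 = k" for x using uniq[OF that(1) a(1)] that a by simp
          show ?thesis
          proof (cases "\<exists>b\<in>C. b div 3 = k + 1")
            case True
            then obtain b where b: "b \<in> C" "b div 3 = k + 1" by blast
            have bhi: "x = b" if "x \<in> C" "x div 3 = k + 1" for x using uniq[OF that(1) b(1)] that b by simp
            obtain t where t: "t < 3" "crel (a mod 3) t" "crel t (b mod 3)" using crel_both[of "a mod 3" "b mod 3"] by auto
            show ?thesis using t alo bhi by blast
          next
            case False
            have "crel (a mod 3) (a mod 3)" by (simp add: crel_def)
            then show ?thesis using False alo by (intro exI[of _ "a mod 3"]) auto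
          qed
        next
          case False
          show ?thesis
          proof (cases "\<exists>b\<in>C. b div 3 = k + 1")
            case True
            then obtain b where b: "b \<in> C" "b div 3 = k + 1" by blast
            have bhi: "x = b" if "x \<in> C" "x div 3 = k + 1" for x using uniq[OF that(1) b(1)] that b by simp
            have "crel (b mod 3) (b mod 3)" by (simp add: crel_def)
            then show ?thesis using False bhi by (intro exI[of _ "b mod 3"]) auto
          next
            case False2: False
            show ?thesis using False False2 by (intro exI[of _ 0]) auto
          qed
        qed
        then obtain t where t: "t < 3" "\<forall>x\<in>C. x div 3 + 1 = k \<longrightarrow> crel (x mod 3) t"
            "\<forall>x\<in>C. x div 3 = k + 1 \<longrightarrow> crel t (x mod 3)" by blast
        define c where "c = 3 * k + t"
        have cdiv: "c div 3 = k" and cmod: "c mod 3 = t" using t(1) by (simp_all add: c_def)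
        have cS: "c \<in> SPn n" using kn t(1) by (simp add: SPn_def c_def)
        have cnC: "c \<notin> C" using nk cdiv by force
        have "is_chain (SPn n) sle (insert c C)"
          unfolding is_chain_def
        proof (intro conjI ballI)
          show "insert c C \<subseteq> SPn n" using CS cS by simp
          fix x y assume x: "x \<in> insert c C" and y: "y \<in> insert c C"
          have cx: "sle x c \<or> sle c x" if xC: "x \<in> C" for x
          proof -
            have "x div 3 \<noteq> k" using nk xC by force
            then consider "x div 3 + 2 \<le> k" | "x div 3 + 1 = k" | "x div 3 = k + 1" | "k + 2 \<le> x div 3"
              by linarith
            then show ?thesis
            proof cases
              case 1 then show ?thesis unfolding sle_def using cdiv by simp
            next
              case 2 then show ?thesis unfolding sle_def using cdiv cmod t(2) xC by simp
            next
              case 3 then show ?thesis unfolding sle_def using cdiv cmod t(3) xC by simp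
            next
              case 4 then show ?thesis unfolding sle_def using cdiv by simp
            qed
          qed
          show "sle x y \<or> sle y x"
          proof (cases "x = c")
            case True
            show ?thesis
            proof (cases "y = c")
              case True then show ?thesis using \<open>x = c\<close> by (simp add: sle_def)
            next
              case False then have "y \<in> C" using y by simp
              then show ?thesis using cx \<open>x = c\<close> by blast
            qed
          next
            case False then have xC: "x \<in> C" using x by simp
            show ?thesis
            proof (cases "y = c")
              case True then show ?thesis using cx[OF xC] by blast
            next
              case False then have "y \<in> C" using y by simp
              then show ?thesis using cmp xC by blast
            qed
          qed
        qed
        then have "insert c C = C" using mc unfolding maximal_chain_def by blast
        then show False using cnC by blast
      qed
    qed
  qed
  have "card C = card ((\<lambda>x. x div 3) ` C)" using card_image[OF inj] by simp
  then show "card C = Suc n" using img by simp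
qed

lemma sle_slice_set:
  assumes "i < n"
  shows "rank_slice (SPn n) sle i (Suc i) = {3 * i..<3 * i + 6}"
proof -
  have "rank_slice (SPn n) sle i (Suc i) = {p \<in> SPn n. i \<le> p div 3 \<and> p div 3 \<le> Suc i}"
    unfolding rank_slice_def using sle_rank by auto
  also have "\<dots> = {3 * i..<3 * i + 6}" using assms unfolding SPn_def by auto
  finally show ?thesis .
qed

lemma sle_crown0: "u < 6 \<Longrightarrow> v < 6 \<Longrightarrow>
   (u = v \<or> u div 3 + 2 \<le> v div 3 \<or> (v div 3 = u div 3 + 1 \<and> crel (u mod 3) (v mod 3))) = crown6_le u v"
proof -
  assume "u < 6" "v < 6"
  then have "u = 0 \<or> u = 1 \<or> u = 2 \<or> u = 3 \<or> u = 4 \<or> u = 5"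
    "v = 0 \<or> v = 1 \<or> v = 2 \<or> v = 3 \<or> v = 4 \<or> v = 5" by auto
  then show ?thesis
    by (elim disjE) (simp_all add: crel_def crown6_le_def)
qed

lemma sle_crown: "u < 6 \<Longrightarrow> v < 6 \<Longrightarrow> sle (3 * i + u) (3 * i + v) = crown6_le u v"
proof -
  assume uv: "u < 6" "v < 6"
  have d: "(3 * i + w) div 3 = i + w div 3" "(3 * i + w) mod 3 = w mod 3" for w by simp_all
  have "sle (3 * i + u) (3 * i + v) \<longleftrightarrow>
     (u = v \<or> u div 3 + 2 \<le> v div 3 \<or> (v div 3 = u div 3 + 1 \<and> crel (u mod 3) (v mod 3)))"
    unfolding sle_def d by auto
  then show ?thesis using sle_crown0[OF uv] by simp
qed

lemma sle_slice_iso: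
  assumes "i < n"
  shows "poset_iso (rank_slice (SPn n) sle i (Suc i)) sle crown6 crown6_le"
  unfolding poset_iso_def sle_slice_set[OF assms] crown6_def
proof (intro exI conjI ballI)
  show "bij_betw (\<lambda>p. p - 3 * i) {3 * i..<3 * i + 6} {0..5}"
    by (rule bij_betw_byWitness[of _ "\<lambda>z. z + 3 * i"]) auto
  fix x y assume x: "x \<in> {3 * i..<3 * i + 6}" and y: "y \<in> {3 * i..<3 * i + 6}"
  have "x = 3 * i + (x - 3 * i)" "y = 3 * i + (y - 3 * i)" using x y by auto
  moreover have "x - 3 * i < 6" "y - 3 * i < 6" using x y by auto
  ultimately show "sle x y = crown6_le (x - 3 * i) (y - 3 * i)"
    using sle_crown by metis
qed

lemma sle_six: "n \<ge> 1 \<Longrightarrow> six_stack (SPn n) sle n"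
  unfolding six_stack_def using sle_fp sle_ranked sle_slice_iso by blast


theorem proposition4p1:
  fixes n :: nat
  assumes "n \<ge> 1"
  shows "(\<exists>(P :: nat set) le. six_stack P le n)
    \<and> (\<forall>(P :: 'a set) leP (Q :: 'b set) leQ.
          six_stack P leP n \<and> six_stack Q leQ n \<longrightarrow> poset_iso P leP Q leQ)"
proof (intro conjI)
  show "\<exists>(P :: nat set) le. six_stack P le n" using sle_six[OF assms] by blast
  show "\<forall>(P :: 'a set) leP (Q :: 'b set) leQ.
          six_stack P leP n \<and> six_stack Q leQ n \<longrightarrow> poset_iso P leP Q leQ"
  proof (intro allI impI)
    fix P :: "'a set" and leP and Q :: "'b set" and leQ
    assume h: "six_stack P leP n \<and> six_stack Q leQ n"
    then have "stack_props P leP n" "stack_props Q leQ n" using six_props by blast+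
    then show "poset_iso P leP Q leQ" by (rule stack_iso)
  qed
qed

end
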